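(* For $n\geq 2$ let $k_n$ be the number of ordered pairs of words $(w,z)$ over the alphabet $\{A,B,C,D\}$ satisfying: (i) both $w$ and $z$ start with the letter $A$, and $|w|+|z|=n$; (ii) $w$ and $z$ contain the same number of letters $A$; (iii) neither $w$ nor $z$ contains a $CB$-factor (a letter $C$ immediately followed by a letter $B$); (iv) for all $i$, if the $i$th letter $A$ from the right in $w$ is immediately preceded by a $C$ and immediately followed by a $B$, then the $i$th segment of $z$ from the left contains a letter $B$; (v) for all $i$, if the $i$th letter $A$ from the right in $w$ is immediately preceded by a $C$ and immediately followed by two consecutive letters $B$, then the $i$th segment of $z$ from the left contains at least two letters $B$. Then there exists a constant $c$ such that $k_n\leq c\cdot 3.70672^n$ for all $n\geq 2$.
   Context: A segment of a word $v$ over $\{A,B,C,D\}$ is a factor (consecutive letters) that starts with a letter $A$ and ends immediately before the next letter $A$, or at the end of $v$. The $i$th segment from the left is the one starting at the $i$th letter $A$ from the left. The words $w$ and $z$ need not have the same length. *)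

theory Defs
  imports Complex_Main
begin

datatype letter = A | B | C | D

type_synonym word = "letter list"

definition apos :: "word \<Rightarrow> nat list" where
  "apos v = filter (\<lambda>p. v ! p = A) [0..<length v]"

text \<open>The j-th segment from the left (0-indexed, so j = i - 1): the factor starting
  at the (j+1)-st letter A from the left and ending just before the next A or at the end.\<close>
definition segment :: "word \<Rightarrow> nat \<Rightarrow> word" where
  "segment v j =
     (let s = apos v ! j;
          e = (if Suc j < length (apos v) then apos v ! Suc j else length v)
      in take (e - s) (drop s v))"

definition countA :: "word \<Rightarrow> nat" where
  "countA v = length (filter (\<lambda>x. x = A) v)"

definition countB :: "word \<Rightarrow> nat" where
  "countB v = length (filter (\<lambda>x. x = B) v)"

definition no_CB :: "word \<Rightarrow> bool" where
  "no_CB v \<longleftrightarrow> \<not> (\<exists>p. Suc p < length v \<and> v ! p = C \<and> v ! Suc p = B)"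

definition apos_right :: "word \<Rightarrow> nat \<Rightarrow> nat" where
  "apos_right v j = rev (apos v) ! j"

definition valid_pair :: "nat \<Rightarrow> word \<Rightarrow> word \<Rightarrow> bool" where
  "valid_pair n w z \<longleftrightarrow>
     w \<noteq> [] \<and> z \<noteq> [] \<and> hd w = A \<and> hd z = A \<and> length w + length z = n \<and>
     countA w = countA z \<and>
     no_CB w \<and> no_CB z \<and>
     (\<forall>j < countA w. let p = apos_right w j in
        (0 < p \<and> w ! (p - 1) = C \<and> Suc p < length w \<and> w ! Suc p = B
           \<longrightarrow> countB (segment z j) \<ge> 1)) \<and>
     (\<forall>j < countA w. let p = apos_right w j in
        (0 < p \<and> w ! (p - 1) = C \<and> Suc (Suc p) < length w \<and> w ! Suc p = B
           \<and> w ! Suc (Suc p) = B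
           \<longrightarrow> countB (segment z j) \<ge> 2))"

definition k_num :: "nat \<Rightarrow> nat" where
  "k_num n = card {(w, z). valid_pair n w z}"

end

theory Submission imports Defs begin

datatype st = S0 | Uf bool | Ub | Ug nat bool | V bool nat bool

fun step :: "st \<Rightarrow> letter \<Rightarrow> st option" where
  "step S0 l = (if l = A then Some (Uf False) else None)"
| "step (Uf p) l = (case l of A \<Rightarrow> Some (V False 0 False) | B \<Rightarrow> Some (if p then Ub else Ug 0 False)
     | C \<Rightarrow> Some (Ug 0 True) | D \<Rightarrow> Some (Ug 0 False))"
| "step Ub l = (case l of A \<Rightarrow> Some (V False 1 False) | B \<Rightarrow> Some (Ug 2 False)
     | C \<Rightarrow> Some (Ug 1 True) | D \<Rightarrow> Some (Ug 1 False))"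
| "step (Ug r c) l = (case l of A \<Rightarrow> Some (V c r False) | B \<Rightarrow> (if c then None else Some (Ug r False))
     | C \<Rightarrow> Some (Ug r True) | D \<Rightarrow> Some (Ug r False))"
| "step (V e r c) l = (case l of A \<Rightarrow> (if r = 0 then Some (Uf e) else None)
     | B \<Rightarrow> (if c then None else Some (V e (r - 1) False))
     | C \<Rightarrow> Some (V e r True) | D \<Rightarrow> Some (V e r False))"

fun run :: "st \<Rightarrow> word \<Rightarrow> st option" where
  "run q [] = Some q"
| "run q (x # xs) = (case step q x of None \<Rightarrow> None | Some q' \<Rightarrow> run q' xs)"

lemma run_append: "run q (xs @ ys) = (case run q xs of None \<Rightarrow> None | Some q' \<Rightarrow> run q' ys)"
  by (induction xs arbitrary: q) (auto split: option.split)

fun good :: "st \<Rightarrow> bool" where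
  "good (Ug r c) = (r \<le> 2)"
| "good (V e r c) = (r \<le> 2)"
| "good _ = True"

lemma good_step: "good q \<Longrightarrow> step q l = Some q' \<Longrightarrow> good q'"
  by (cases q; cases l) (auto split: if_splits)

fun phi :: "st \<Rightarrow> real" where
  "phi S0 = 263440407933"
| "phi (Uf p) = (if p then 808374395291 else 976499645522)"
| "phi Ub = 353306535014"
| "phi (Ug r c) = (if r = 0 then (if c then 666610795292 else 976499645522)
    else if r = 1 then (if c then 285209352298 else 417795261322)
    else (if c then 122026788664 else 178753654631))"
| "phi (V e r c) = (if e then
      (if r = 0 then (if c then 604496763007 else 827828662303)
       else if r = 1 then (if c then 130854498910 else 354186398206)
       else (if c then 55986082348 else 151538609843))
    else
      (if r = 0 then (if c then 730219658408 else 1000000000000)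
       else if r = 1 then (if c then 158069543698 else 427849885290)
       else (if c then 67630036139 else 183055524342)))"

definition nxt :: "st \<Rightarrow> letter \<Rightarrow> real" where
  "nxt q l = (case step q l of None \<Rightarrow> 0 | Some q' \<Rightarrow> phi q')"

lemma phi_ge1: "good q \<Longrightarrow> 1 \<le> phi q"
  by (cases q) auto

lemma r_cases: "(r::nat) \<le> 2 \<Longrightarrow> r = 0 \<or> r = 1 \<or> r = 2" by auto

lemma potential: "good q \<Longrightarrow> nxt q A + nxt q B + nxt q C + nxt q D \<le> 3.70672 * phi q"
proof (cases q)
  case (Ug r c)
  assume "good q"
  then have "r = 0 \<or> r = 1 \<or> r = 2" using Ug by auto
  then show ?thesis using Ug by (cases c) (auto simp: nxt_def)
next
  case (V e r c)
  assume "good q"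
  then have "r = 0 \<or> r = 1 \<or> r = 2" using V by auto
  then show ?thesis using V by (cases c; cases e) (auto simp: nxt_def)
qed (auto simp: nxt_def)

definition cnt :: "st \<Rightarrow> nat \<Rightarrow> nat" where
  "cnt q n = card {v. length v = n \<and> run q v \<noteq> None}"

lemma letter_univ: "(UNIV :: letter set) = {A, B, C, D}"
  using letter.exhaust by auto

lemma fin_len: "finite {v :: word. length v = n \<and> P v}"
proof -
  have "{v :: word. length v = n \<and> P v} \<subseteq> {xs. set xs \<subseteq> {A,B,C,D} \<and> length xs = n}"
    using letter_univ by auto
  moreover have "finite {xs. set xs \<subseteq> {A,B,C,D} \<and> length xs = n}"
    by (rule finite_lists_length_eq) simp
  ultimately show ?thesis by (rule finite_subset)
qed

definition Sl :: "st \<Rightarrow> letter \<Rightarrow> nat \<Rightarrow> word set" where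
  "Sl q l n = {v. length v = n \<and> (case step q l of None \<Rightarrow> False | Some q' \<Rightarrow> run q' v \<noteq> None)}"

lemma card_Sl: "card (Sl q l n) = (case step q l of None \<Rightarrow> 0 | Some q' \<Rightarrow> cnt q' n)"
  by (cases "step q l") (auto simp: Sl_def cnt_def)

lemma cnt_Suc: "cnt q (Suc n) \<le> card (Sl q A n) + card (Sl q B n) + card (Sl q C n) + card (Sl q D n)"
proof -
  let ?U = "(Cons A ` Sl q A n \<union> Cons B ` Sl q B n) \<union> (Cons C ` Sl q C n \<union> Cons D ` Sl q D n)"
  have sub: "{v. length v = Suc n \<and> run q v \<noteq> None} \<subseteq> ?U"
  proof
    fix v assume "v \<in> {v. length v = Suc n \<and> run q v \<noteq> None}"
    then obtain x u where v: "v = x # u" "length u = n" "run q (x#u) \<noteq> None"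
      by (cases v) auto
    then have "u \<in> Sl q x n" by (auto simp: Sl_def split: option.splits)
    then show "v \<in> ?U" using v(1) by (cases x) auto
  qed
  have fin: "finite ?U" by (auto simp: Sl_def intro: fin_len)
  have "cnt q (Suc n) \<le> card ?U" unfolding cnt_def by (rule card_mono[OF fin sub])
  also have "\<dots> \<le> card (Cons A ` Sl q A n \<union> Cons B ` Sl q B n) + card (Cons C ` Sl q C n \<union> Cons D ` Sl q D n)"
    by (rule card_Un_le)
  also have "\<dots> \<le> (card (Cons A ` Sl q A n) + card (Cons B ` Sl q B n)) + (card (Cons C ` Sl q C n) + card (Cons D ` Sl q D n))"
    by (intro add_mono card_Un_le)
  also have "\<dots> = card (Sl q A n) + card (Sl q B n) + card (Sl q C n) + card (Sl q D n)"
    by (simp add: card_image)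
  finally show ?thesis .
qed

lemma cnt_bound: "good q \<Longrightarrow> real (cnt q n) \<le> phi q * 3.70672 ^ n"
proof (induction n arbitrary: q)
  case 0
  have "{v. length v = 0 \<and> run q v \<noteq> None} = {[]}" by auto
  then have "cnt q 0 = 1" by (simp add: cnt_def)
  then show ?case using phi_ge1[OF 0] by simp
next
  case (Suc n)
  have key: "real (card (Sl q l n)) \<le> nxt q l * 3.70672 ^ n" for l
  proof (cases "step q l")
    case None then show ?thesis by (simp add: card_Sl nxt_def)
  next
    case (Some q')
    then have "good q'" using good_step Suc.prems by blast
    then show ?thesis using Suc.IH[of q'] Some by (simp add: card_Sl nxt_def)
  qed
  have "real (cnt q (Suc n)) \<le> real (card (Sl q A n)) + real (card (Sl q B n)) + real (card (Sl q C n)) + real (card (Sl q D n))"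
    using cnt_Suc[of q n] by linarith
  also have "\<dots> \<le> (nxt q A + nxt q B + nxt q C + nxt q D) * 3.70672 ^ n"
    using key[of A] key[of B] key[of C] key[of D] by (simp add: algebra_simps)
  also have "\<dots> \<le> (3.70672 * phi q) * 3.70672 ^ n"
    by (rule mult_right_mono[OF potential[OF Suc.prems]]) simp
  also have "\<dots> = phi q * 3.70672 ^ Suc n" by simp
  finally show ?case .
qed



fun ncb :: "bool \<Rightarrow> word \<Rightarrow> bool" where
  "ncb c [] = True"
| "ncb c (x # u) = (\<not> (c \<and> x = B) \<and> ncb (x = C) u)"

lemma ncb_append: "ncb c (xs @ ys) = (ncb c xs \<and> ncb (if xs = [] then c else last xs = C) ys)"
  by (induction xs arbitrary: c) auto

lemma noCB_Nil: "no_CB []" by (simp add: no_CB_def)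

lemma noCB_Cons: "no_CB (x # v) = (\<not> (x = C \<and> v \<noteq> [] \<and> hd v = B) \<and> no_CB v)"
proof
  assume h: "no_CB (x # v)"
  have 1: "\<not> (x = C \<and> v \<noteq> [] \<and> hd v = B)"
  proof
    assume a: "x = C \<and> v \<noteq> [] \<and> hd v = B"
    then have "Suc 0 < length (x#v) \<and> (x#v) ! 0 = C \<and> (x#v) ! Suc 0 = B"
      by (cases v) auto
    then show False using h unfolding no_CB_def by blast
  qed
  have 2: "no_CB v"
    unfolding no_CB_def
  proof
    assume "\<exists>p. Suc p < length v \<and> v ! p = C \<and> v ! Suc p = B"
    then obtain p where "Suc p < length v \<and> v ! p = C \<and> v ! Suc p = B" by blast
    then have "Suc (Suc p) < length (x#v) \<and> (x#v) ! Suc p = C \<and> (x#v) ! Suc (Suc p) = B" by simp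
    then show False using h unfolding no_CB_def by blast
  qed
  show "\<not> (x = C \<and> v \<noteq> [] \<and> hd v = B) \<and> no_CB v" using 1 2 by blast
next
  assume h: "\<not> (x = C \<and> v \<noteq> [] \<and> hd v = B) \<and> no_CB v"
  show "no_CB (x # v)" unfolding no_CB_def
  proof
    assume "\<exists>p. Suc p < length (x # v) \<and> (x # v) ! p = C \<and> (x # v) ! Suc p = B"
    then obtain p where p: "Suc p < length (x # v) \<and> (x # v) ! p = C \<and> (x # v) ! Suc p = B" by blast
    show False
    proof (cases p)
      case 0
      then show False using p h by (cases v) auto
    next
      case (Suc p')
      then have "Suc p' < length v \<and> v ! p' = C \<and> v ! Suc p' = B" using p by simp
      then show False using h unfolding no_CB_def by blast
    qed
  qed
qed

lemma ncb_iff: "ncb c v = (\<not> (c \<and> v \<noteq> [] \<and> hd v = B) \<and> no_CB v)"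
  by (induction v arbitrary: c) (auto simp: noCB_Cons noCB_Nil)

lemma noCB_ncb: "no_CB v = ncb False v" by (simp add: ncb_iff)

definition join :: "word list \<Rightarrow> word" where "join us = concat (map (\<lambda>u. A # u) us)"

lemma join_Nil[simp]: "join [] = []" and join_Cons: "join (u # us) = A # u @ join us"
  and join_append: "join (xs @ ys) = join xs @ join ys"
  by (auto simp: join_def)

lemma exists_join: "\<exists>u us. v = u @ join us \<and> A \<notin> set u \<and> (\<forall>x\<in>set us. A \<notin> set x)"
proof (induction v)
  case Nil
  show ?case by (rule exI[of _ "[]"], rule exI[of _ "[]"]) simp
next
  case (Cons x v)
  then obtain u us where h: "v = u @ join us" "A \<notin> set u" "\<forall>x\<in>set us. A \<notin> set x" by blast
  show ?case
  proof (cases "x = A")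
    case True
    then show ?thesis using h by (intro exI[of _ "[]"] exI[of _ "u # us"]) (auto simp: join_Cons)
  next
    case False
    then show ?thesis using h by (intro exI[of _ "x # u"] exI[of _ "us"]) auto
  qed
qed

lemma exists_join2: "w \<noteq> [] \<Longrightarrow> hd w = A \<Longrightarrow> \<exists>us. w = join us \<and> (\<forall>x\<in>set us. A \<notin> set x)"
proof -
  assume w: "w \<noteq> []" "hd w = A"
  obtain u us where h: "w = u @ join us" "A \<notin> set u" "\<forall>x\<in>set us. A \<notin> set x"
    using exists_join by blast
  have "u = []"
  proof (rule ccontr)
    assume "u \<noteq> []"
    then have "hd w = hd u" using h(1) by simp
    then show False using w(2) h(2) \<open>u \<noteq> []\<close> by (metis list.set_sel(1))
  qed
  then show ?thesis using h by auto
qed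

definition segs :: "word \<Rightarrow> word list" where
  "segs w = (SOME us. w = join us \<and> (\<forall>x\<in>set us. A \<notin> set x))"

lemma segs: "w \<noteq> [] \<Longrightarrow> hd w = A \<Longrightarrow> w = join (segs w) \<and> (\<forall>x\<in>set (segs w). A \<notin> set x)"
  unfolding segs_def by (rule someI_ex[OF exists_join2])

lemma countA_append: "countA (xs @ ys) = countA xs + countA ys" by (simp add: countA_def)

lemma countA_free: "A \<notin> set u \<Longrightarrow> countA u = 0"
  by (auto simp: countA_def filter_empty_conv)

lemma countA_join: "\<forall>x\<in>set us. A \<notin> set x \<Longrightarrow> countA (join us) = length us"
  by (induction us) (auto simp: countA_def filter_empty_conv join_Cons)

lemma countB_A[simp]: "countB (A # v) = countB v" by (simp add: countB_def)

lemma apos_append: "apos (xs @ ys) = apos xs @ map (\<lambda>p. p + length xs) (apos ys)"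
proof -
  have u: "[0..<length (xs@ys)] = [0..<length xs] @ map (\<lambda>p. p + length xs) [0..<length ys]"
    by (simp add: map_add_upt upt_add_eq_append[of 0] add.commute)
  have 1: "filter (\<lambda>p. (xs @ ys) ! p = A) [0..<length xs] = filter (\<lambda>p. xs ! p = A) [0..<length xs]"
    by (rule filter_cong) (auto simp: nth_append)
  have 2: "filter (\<lambda>p. (xs @ ys) ! p = A) (map (\<lambda>p. p + length xs) [0..<length ys])
     = map (\<lambda>p. p + length xs) (filter (\<lambda>p. ys ! p = A) [0..<length ys])"
    by (simp add: filter_map o_def nth_append)
  show ?thesis unfolding apos_def u filter_append 1 2 by simp
qed

lemma apos_free: "A \<notin> set u \<Longrightarrow> apos u = []"
  by (auto simp: apos_def filter_empty_conv) (metis nth_mem)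

lemma apos_Nil: "apos [] = []" by (simp add: apos_def)

lemma apos_A: "apos [A] = [0]" by (simp add: apos_def)

lemma apos_join_Cons: "A \<notin> set u \<Longrightarrow>
   apos (join (u # us)) = 0 # map (\<lambda>p. p + Suc (length u)) (apos (join us))"
proof -
  assume u: "A \<notin> set u"
  have "join (u # us) = ([A] @ u) @ join us" by (simp add: join_Cons)
  then show ?thesis by (simp only: apos_append) (simp add: apos_A apos_free[OF u] o_def)
qed

lemma apos_join_len: "\<forall>x\<in>set us. A \<notin> set x \<Longrightarrow> length (apos (join us)) = length us"
  by (induction us) (auto simp: apos_join_Cons apos_Nil)

lemma apos_join_nth: "\<forall>x\<in>set us. A \<notin> set x \<Longrightarrow> k < length us \<Longrightarrow>
   apos (join us) ! k = length (join (take k us))"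
proof (induction us arbitrary: k)
  case Nil then show ?case by simp
next
  case (Cons u us)
  show ?case
  proof (cases k)
    case 0 then show ?thesis using Cons.prems by (simp add: apos_join_Cons)
  next
    case (Suc k')
    then show ?thesis using Cons by (simp add: apos_join_Cons apos_join_len) (simp add: join_Cons)
  qed
qed

lemma join_split: "k < length us \<Longrightarrow> join us = join (take k us) @ A # us ! k @ join (drop (Suc k) us)"
proof -
  assume k: "k < length us"
  have "join us = join (take k us @ drop k us)" by simp
  also have "drop k us = us ! k # drop (Suc k) us" using k by (rule Cons_nth_drop_Suc[symmetric])
  finally show ?thesis by (simp add: join_append join_Cons)
qed

lemma segment_join: "\<forall>x\<in>set us. A \<notin> set x \<Longrightarrow> k < length us \<Longrightarrow> segment (join us) k = A # us ! k"
proof -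
  assume af: "\<forall>x\<in>set us. A \<notin> set x" and k: "k < length us"
  let ?s = "length (join (take k us))"
  have ts: "take (Suc k) us = take k us @ [us ! k]" using k by (rule take_Suc_conv_app_nth)
  have e: "(if Suc k < length (apos (join us)) then apos (join us) ! Suc k else length (join us))
      = ?s + Suc (length (us ! k))"
  proof (cases "Suc k < length us")
    case True
    then show ?thesis using af by (simp add: apos_join_len apos_join_nth ts join_append join_Cons)
  next
    case False
    then have "drop (Suc k) us = []" by simp
    then have "length (join us) = ?s + Suc (length (us ! k))" using join_split[OF k] by simp
    then show ?thesis using False by (simp add: apos_join_len[OF af])
  qed
  show ?thesis unfolding segment_def Let_def e using af k
    by (subst (2) join_split[OF k]) (simp add: apos_join_nth)
qed



definition endC :: "word \<Rightarrow> bool" where "endC u \<longleftrightarrow> u \<noteq> [] \<and> last u = C"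

definition req :: "bool \<Rightarrow> word \<Rightarrow> nat" where
  "req p u = (if p \<and> take 1 u = [B] then (if take 2 u = [B, B] then 2 else 1) else 0)"

lemma run_Ug: "A \<notin> set u \<Longrightarrow> ncb c u \<Longrightarrow> run (Ug r c) u = Some (Ug r (if u = [] then c else last u = C))"
proof (induction u arbitrary: c)
  case Nil then show ?case by simp
next
  case (Cons x u)
  then show ?case by (cases x) auto
qed

lemma run_V: "A \<notin> set v \<Longrightarrow> ncb c v \<Longrightarrow>
   run (V e r c) v = Some (V e (r - countB v) (if v = [] then c else last v = C))"
proof (induction v arbitrary: c r)
  case Nil then show ?case by (simp add: countB_def)
next
  case (Cons x v)
  then show ?case by (cases x) (auto simp: countB_def)
qed

lemma run_Uf: "A \<notin> set u \<Longrightarrow> ncb False u \<Longrightarrow>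
   \<exists>q'. run (Uf p) u = Some q' \<and> step q' A = Some (V (endC u) (req p u) False)"
proof (cases u)
  case Nil then show ?thesis by (simp add: endC_def req_def)
next
  case (Cons x u')
  assume a: "A \<notin> set u" "ncb False u"
  show ?thesis
  proof (cases x)
    case A then show ?thesis using a Cons by simp
  next
    case B
    show ?thesis
    proof (cases p)
      case False
      then show ?thesis using a Cons B by (simp add: run_Ug endC_def req_def)
    next
      case True
      show ?thesis
      proof (cases u')
        case Nil then show ?thesis using a Cons B True by (simp add: endC_def req_def)
      next
        case (Cons y u'')
        then show ?thesis using a \<open>u = x # u'\<close> B True
          by (cases y) (auto simp: run_Ug endC_def req_def)
      qed
    qed
  next
    case C then show ?thesis using a Cons by (simp add: run_Ug endC_def req_def)
  next
    case D then show ?thesis using a Cons by (simp add: run_Ug endC_def req_def)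
  qed
qed

lemma run_block: "A \<notin> set u \<Longrightarrow> ncb False u \<Longrightarrow> A \<notin> set v \<Longrightarrow> ncb False v \<Longrightarrow>
   run (Uf p) (u @ A # v) = Some (V (endC u) (req p u - countB v) (v \<noteq> [] \<and> last v = C))"
proof -
  assume h: "A \<notin> set u" "ncb False u" "A \<notin> set v" "ncb False v"
  obtain q' where q: "run (Uf p) u = Some q'" "step q' A = Some (V (endC u) (req p u) False)"
    using run_Uf[OF h(1,2)] by blast
  show ?thesis using q h(3,4) by (simp add: run_append run_V)
qed

fun ilv :: "word list \<Rightarrow> word list \<Rightarrow> word" where
  "ilv (u # us) (v # vs) = A # u @ A # v @ ilv us vs"
| "ilv _ _ = []"

lemma ilv_hd: "ilv us vs = [] \<or> hd (ilv us vs) = A"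
  by (cases "(us, vs)" rule: ilv.cases) auto

lemma ilv_len: "length us = length vs \<Longrightarrow> length (ilv us vs) = length (join us) + length (join vs)"
  by (induction us vs rule: ilv.induct) (auto simp: join_Cons)

lemma app_inj: "A \<notin> set u \<Longrightarrow> A \<notin> set u' \<Longrightarrow> (r = [] \<or> hd r = A) \<Longrightarrow> (r' = [] \<or> hd r' = A) \<Longrightarrow>
   u @ r = u' @ r' \<Longrightarrow> u = u' \<and> r = r'"
proof (induction u arbitrary: u')
  case Nil then show ?case by (cases u') auto
next
  case (Cons x u) then show ?case by (cases u') auto
qed

lemma ilv_inj: "length us = length vs \<Longrightarrow> length us' = length vs' \<Longrightarrow>
   \<forall>x\<in>set us. A \<notin> set x \<Longrightarrow> \<forall>x\<in>set vs. A \<notin> set x \<Longrightarrow>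
   \<forall>x\<in>set us'. A \<notin> set x \<Longrightarrow> \<forall>x\<in>set vs'. A \<notin> set x \<Longrightarrow>
   ilv us vs = ilv us' vs' \<Longrightarrow> us = us' \<and> vs = vs'"
proof (induction us arbitrary: vs us' vs')
  case Nil then show ?case by (cases us'; cases vs') auto
next
  case (Cons u us)
  obtain v vs0 where vs: "vs = v # vs0" using Cons.prems(1) by (cases vs) auto
  obtain u' us0 where us': "us' = u' # us0"
    using Cons.prems vs by (cases us'; cases vs') auto
  obtain v' vs0' where vs': "vs' = v' # vs0'" using Cons.prems(2) us' by (cases vs') auto
  have e: "u @ (A # v @ ilv us vs0) = u' @ (A # v' @ ilv us0 vs0')"
    using Cons.prems(7) vs us' vs' by simp
  have 1: "u = u' \<and> v @ ilv us vs0 = v' @ ilv us0 vs0'"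
    using app_inj[OF _ _ _ _ e] Cons.prems vs us' vs' by auto
  have 2: "v = v' \<and> ilv us vs0 = ilv us0 vs0'"
    using app_inj[OF _ _ ilv_hd ilv_hd, of v v'] 1 Cons.prems vs us' vs' by auto
  have "us = us0 \<and> vs0 = vs0'"
    using Cons.IH[of vs0 us0 vs0'] 2 Cons.prems vs us' vs' by auto
  then show ?case using 1 2 vs us' vs' by simp
qed

definition pf :: "bool \<Rightarrow> word list \<Rightarrow> nat \<Rightarrow> bool" where
  "pf p us k = (if k = 0 then p else endC (us ! (k - 1)))"

lemma chain: "step q A = Some (Uf p) \<Longrightarrow> length vs = length us \<Longrightarrow>
   \<forall>u\<in>set us. A \<notin> set u \<and> ncb False u \<Longrightarrow> \<forall>v\<in>set vs. A \<notin> set v \<and> ncb False v \<Longrightarrow>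
   \<forall>k<length us. req (pf p us k) (us ! k) \<le> countB (vs ! k) \<Longrightarrow> run q (ilv us vs) \<noteq> None"
proof (induction us arbitrary: vs q p)
  case Nil then show ?case by simp
next
  case (Cons u us)
  obtain v vs0 where vs: "vs = v # vs0" using Cons.prems(2) by (cases vs) auto
  have r0: "req p u \<le> countB v" using Cons.prems(5) vs by (auto simp: pf_def)
  let ?q = "V (endC u) 0 (v \<noteq> [] \<and> last v = C)"
  have blk: "run (Uf p) (u @ A # v) = Some ?q"
    using run_block[of u v p] Cons.prems(3,4) vs r0 by auto
  have "run q (ilv (u # us) vs) = run (Uf p) ((u @ A # v) @ ilv us vs0)"
    using vs Cons.prems(1) by simp
  also have "\<dots> = run ?q (ilv us vs0)" unfolding run_append[of "Uf p" "u @ A # v" "ilv us vs0"] blk by simp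
  finally have eq: "run q (ilv (u # us) vs) = run ?q (ilv us vs0)" .
  have "run ?q (ilv us vs0) \<noteq> None"
  proof (rule Cons.IH)
    show "step ?q A = Some (Uf (endC u))" by simp
    show "length vs0 = length us" using Cons.prems(2) vs by simp
    show "\<forall>u\<in>set us. A \<notin> set u \<and> ncb False u" using Cons.prems(3) by simp
    show "\<forall>v\<in>set vs0. A \<notin> set v \<and> ncb False v" using Cons.prems(4) vs by simp
    show "\<forall>k<length us. req (pf (endC u) us k) (us ! k) \<le> countB (vs0 ! k)"
    proof (intro allI impI)
      fix k assume "k < length us"
      then have "req (pf p (u # us) (Suc k)) ((u # us) ! Suc k) \<le> countB (vs ! Suc k)"
        using Cons.prems(5) by (metis Suc_mono length_Cons nth_Cons_Suc)
      moreover have "pf p (u # us) (Suc k) = pf (endC u) us k"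
        by (cases k) (auto simp: pf_def)
      ultimately show "req (pf (endC u) us k) (us ! k) \<le> countB (vs0 ! k)" using vs by simp
    qed
  qed
  then show ?case using eq by simp
qed



lemma ncb_join: "ncb c (join us) \<Longrightarrow> \<forall>u\<in>set us. ncb False u"
proof (induction us arbitrary: c)
  case Nil then show ?case by simp
next
  case (Cons u us)
  then have "ncb False (u @ join us)" by (simp add: join_Cons)
  then show ?case using Cons.IH by (auto simp: ncb_append)
qed

lemma L_pre: "0 < k \<Longrightarrow> k \<le> length us \<Longrightarrow>
  (join (take k us) \<noteq> [] \<and> last (join (take k us)) = C) = endC (us ! (k - 1))"
proof -
  assume k: "0 < k" "k \<le> length us"
  have "take k us = take (k - 1) us @ [us ! (k - 1)]"
    using k take_Suc_conv_app_nth[of "k - 1" us] by simp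
  then have "join (take k us) = join (take (k - 1) us) @ A # us ! (k - 1)"
    by (simp add: join_append join_Cons)
  then show ?thesis by (simp add: endC_def)
qed

lemma L_prev: "w = pre @ A # r \<Longrightarrow> (0 < length pre \<and> w ! (length pre - 1) = C) = (pre \<noteq> [] \<and> last pre = C)"
  by (cases pre rule: rev_cases) (auto simp: nth_append)

lemma L_next: "w = pre @ A # u @ post \<Longrightarrow> A \<notin> set u \<Longrightarrow> (post = [] \<or> hd post = A) \<Longrightarrow>
  (Suc (length pre) < length w \<and> w ! Suc (length pre) = B) = (take 1 u = [B])"
  by (cases u; cases post) (auto simp: nth_append)

lemma L_next2: "w = pre @ A # u @ post \<Longrightarrow> A \<notin> set u \<Longrightarrow> (post = [] \<or> hd post = A) \<Longrightarrow>
  (Suc (Suc (length pre)) < length w \<and> w ! Suc (length pre) = B \<and> w ! Suc (Suc (length pre)) = B)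
    = (take 2 u = [B, B])"
proof (cases u)
  case Nil then show "w = pre @ A # u @ post \<Longrightarrow> A \<notin> set u \<Longrightarrow> (post = [] \<or> hd post = A) \<Longrightarrow> ?thesis"
    by (cases post) (auto simp: nth_append)
next
  case (Cons x u')
  then show "w = pre @ A # u @ post \<Longrightarrow> A \<notin> set u \<Longrightarrow> (post = [] \<or> hd post = A) \<Longrightarrow> ?thesis"
    by (cases u'; cases post) (auto simp: nth_append)
qed

definition enc :: "word \<times> word \<Rightarrow> word" where
  "enc wz = ilv (segs (fst wz)) (rev (segs (snd wz)))"

lemma valid_facts:
  assumes v: "valid_pair n w z"
  shows "w = join (segs w)" "\<forall>x\<in>set (segs w). A \<notin> set x"
    "z = join (segs z)" "\<forall>x\<in>set (segs z). A \<notin> set x"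
    "length (segs z) = length (segs w)"
proof -
  have h: "w \<noteq> []" "hd w = A" "z \<noteq> []" "hd z = A" "countA w = countA z"
    using v by (auto simp: valid_pair_def)
  show w: "w = join (segs w)" "\<forall>x\<in>set (segs w). A \<notin> set x" using segs[OF h(1,2)] by auto
  show z: "z = join (segs z)" "\<forall>x\<in>set (segs z). A \<notin> set x" using segs[OF h(3,4)] by auto
  show "length (segs z) = length (segs w)"
    using countA_join[OF w(2)] countA_join[OF z(2)] h(5) w(1) z(1) by metis
qed

lemma enc_len: "valid_pair n w z \<Longrightarrow> length (enc (w, z)) = n"
proof -
  assume v: "valid_pair n w z"
  note f = valid_facts[OF v]
  have lj: "length (join xs) = sum_list (map (\<lambda>u. Suc (length u)) xs)" for xs
    by (induction xs) (auto simp: join_Cons)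
  have "length (enc (w, z)) = length (join (segs w)) + length (join (rev (segs z)))"
    unfolding enc_def using f(5) by (simp add: ilv_len)
  also have "length (join (rev (segs z))) = length (join (segs z))"
    by (simp add: lj rev_map[symmetric])
  finally show ?thesis using v f(1,3) by (simp add: valid_pair_def)
qed

lemma enc_inj: "inj_on enc {(w, z). valid_pair n w z}"
proof (rule inj_onI)
  fix x y assume x: "x \<in> {(w, z). valid_pair n w z}" and y: "y \<in> {(w, z). valid_pair n w z}"
    and e: "enc x = enc y"
  obtain w z where xw: "x = (w, z)" "valid_pair n w z" using x by auto
  obtain w' z' where yw: "y = (w', z')" "valid_pair n w' z'" using y by auto
  note f = valid_facts[OF xw(2)] and g = valid_facts[OF yw(2)]
  have "segs w = segs w' \<and> rev (segs z) = rev (segs z')"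
    using e xw(1) yw(1) f g by (intro ilv_inj) (auto simp: enc_def)
  then show "x = y" using xw(1) yw(1) f(1,3) g(1,3) by (metis rev_rev_ident)
qed

lemma enc_run: "valid_pair n w z \<Longrightarrow> run S0 (enc (w, z)) \<noteq> None"
proof -
  assume v: "valid_pair n w z"
  note f = valid_facts[OF v]
  define us where "us = segs w"
  define zs where "zs = segs z"
  define m where "m = length us"
  have w: "w = join us" and af: "\<forall>x\<in>set us. A \<notin> set x" and zj: "z = join zs"
    and afz: "\<forall>x\<in>set zs. A \<notin> set x" and lz: "length zs = m"
    using f by (auto simp: us_def zs_def m_def)
  have cA: "countA w = m" using countA_join[OF af] w m_def by simp
  have ncbw: "\<forall>u\<in>set us. ncb False u" using v w by (intro ncb_join) (auto simp: valid_pair_def noCB_ncb)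
  have ncbz: "\<forall>u\<in>set zs. ncb False u" using v zj by (intro ncb_join) (auto simp: valid_pair_def noCB_ncb)
  have c4: "\<forall>j<m. 0 < apos_right w j \<and> w ! (apos_right w j - 1) = C \<and> Suc (apos_right w j) < length w
        \<and> w ! Suc (apos_right w j) = B \<longrightarrow> 1 \<le> countB (segment z j)"
    using v cA by (simp add: valid_pair_def Let_def)
  have c5: "\<forall>j<m. 0 < apos_right w j \<and> w ! (apos_right w j - 1) = C \<and> Suc (Suc (apos_right w j)) < length w
        \<and> w ! Suc (apos_right w j) = B \<and> w ! Suc (Suc (apos_right w j)) = B
        \<longrightarrow> 2 \<le> countB (segment z j)"
    using v cA by (simp add: valid_pair_def Let_def)
  have cond: "req (pf False us k) (us ! k) \<le> countB (rev zs ! k)" if k: "k < m" for k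
  proof -
    define j where "j = m - Suc k"
    have j: "j < m" using k by (simp add: j_def)
    define pre where "pre = join (take k us)"
    define post where "post = join (drop (Suc k) us)"
    have wsplit: "w = pre @ A # us ! k @ post" using join_split[of k us] k w
      by (simp add: pre_def post_def m_def)
    have post: "post = [] \<or> hd post = A" unfolding post_def
      by (cases "drop (Suc k) us") (auto simp: join_Cons)
    have uA: "A \<notin> set (us ! k)" using af k by (simp add: m_def)
    have p: "apos_right w j = length pre"
    proof -
      have "apos_right w j = apos w ! (length (apos w) - Suc j)"
        unfolding apos_right_def using j w apos_join_len[OF af] by (simp add: rev_nth m_def)
      also have "length (apos w) - Suc j = k" using w apos_join_len[OF af] k by (simp add: j_def m_def)
      finally show ?thesis using w apos_join_nth[OF af] k by (simp add: pre_def m_def)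
    qed
    have prev: "(0 < length pre \<and> w ! (length pre - 1) = C) = pf False us k"
    proof (cases "k = 0")
      case True then show ?thesis by (simp add: pre_def pf_def)
    next
      case False
      then show ?thesis using L_prev[OF wsplit] L_pre[of k us] k
        by (simp add: pre_def pf_def m_def)
    qed
    have seg: "countB (segment z j) = countB (rev zs ! k)"
      using segment_join[OF afz, of j] j lz zj k by (simp add: rev_nth j_def)
    have n1: "(Suc (length pre) < length w \<and> w ! Suc (length pre) = B) = (take 1 (us ! k) = [B])"
      by (rule L_next[OF wsplit uA post])
    have n2: "(Suc (Suc (length pre)) < length w \<and> w ! Suc (length pre) = B \<and> w ! Suc (Suc (length pre)) = B)
      = (take 2 (us ! k) = [B, B])"
      by (rule L_next2[OF wsplit uA post])
    have a4: "pf False us k \<and> take 1 (us ! k) = [B] \<longrightarrow> 1 \<le> countB (rev zs ! k)"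
      using c4 j p prev n1 seg by auto
    have a5: "pf False us k \<and> take 2 (us ! k) = [B, B] \<longrightarrow> 2 \<le> countB (rev zs ! k)"
      using c5 j p prev n2 seg by auto
    show ?thesis using a4 a5 by (auto simp: req_def)
  qed
  have "run S0 (ilv us (rev zs)) \<noteq> None"
  proof (rule chain)
    show "step S0 A = Some (Uf False)" by simp
    show "length (rev zs) = length us" using lz m_def by simp
    show "\<forall>u\<in>set us. A \<notin> set u \<and> ncb False u" using af ncbw by blast
    show "\<forall>v\<in>set (rev zs). A \<notin> set v \<and> ncb False v" using afz ncbz by simp
    show "\<forall>k<length us. req (pf False us k) (us ! k) \<le> countB (rev zs ! k)" using cond m_def by simp
  qed
  then show ?thesis by (simp add: enc_def us_def zs_def)
qed

theorem corollary4p3: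
  shows "\<exists>c::real. \<forall>n::nat. n \<ge> 2 \<longrightarrow> real (k_num n) \<le> c * 3.70672 ^ n"
proof (intro exI allI impI)
  fix n :: nat
  have "k_num n \<le> card {v. length v = n \<and> run S0 v \<noteq> None}"
    unfolding k_num_def
  proof (rule card_inj_on_le[OF enc_inj])
    show "enc ` {(w, z). valid_pair n w z} \<subseteq> {v. length v = n \<and> run S0 v \<noteq> None}"
      using enc_len enc_run by auto
    show "finite {v. length v = n \<and> run S0 v \<noteq> None}" by (rule fin_len)
  qed
  then have "real (k_num n) \<le> real (cnt S0 n)" by (simp add: cnt_def)
  also have "\<dots> \<le> phi S0 * 3.70672 ^ n" by (rule cnt_bound) simp
  finally show "real (k_num n) \<le> phi S0 * 3.70672 ^ n" .
qed


end
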